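(* Let $V$ be a real Hilbert space, $A$ a closed linear operator on $V$ with domain $U$ and $0\in\rho(A_c)$, and assume (K1), (K2-1)–(K2-4), (B1)–(B3) as in the context. Let $\psi_\star\in\mathcal N(i-A_c)\setminus\{0\}$, let $d\in U$ satisfy $(d,\psi_\star)_{U_c}=1$, and define $l=(l^1,l^2):X\to\mathbb R^2$ by $l^1u=\frac1\pi\int_0^{2\pi}(d,u(t))_U\cos t\,dt$, $l^2u=\frac1\pi\int_0^{2\pi}(d,u(t))_U\sin t\,dt$. Let $u_\star(t):=\mathrm{Re}(\psi_\star e^{it})\in X_1$ and $f^0_{\lambda u}:=h_{\lambda u}(0,0)\in\mathcal L(U,V)$. Then the operator $$S:\mathbb R^2\oplus X_0\oplus X_1\to\mathbb R^2\oplus Y_0\oplus Y_1,\quad S(\lambda,\sigma,u)=\big(l u,\ u_t-Au-\sigma Au_\star-\lambda f^0_{\lambda u}u_\star\big),$$ (with $(f^0_{\lambda u}u_\star)(t)=f^0_{\lambda u}(u_\star(t))$) is bijective.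
   Context: $V_c$, $U_c$ complexifications, $A_c$ the complex-linear extension of $A$; $U=\mathcal D(A)$ is a Hilbert space with $\|u\|_U=\|Au\|_V$ and $(\cdot,\cdot)_{U_c}$ its complexified inner product. $X:=H^1_{per}((0,2\pi),V)\cap L^2((0,2\pi),U)$, $Y:=L^2((0,2\pi),V)$. $X_0=U$ and $Y_0=V$ (constant functions), $X_1=\{a\cos t+b\sin t:a,b\in U\}$, $Y_1=\{a\cos t+b\sin t:a,b\in V\}$. Hypotheses: (K1) $\exists M$: $\|(in-A_c)^{-1}\|_{V_c\to V_c}\le M/n$, $n\ge2$. (K2-1) $h:K\times U\to V$ for an open interval $K\ni0$. (K2-2) $h(\lambda,u(\cdot))\in Y$ for $(\lambda,u)\in K\times X$. (K2-3) $(\lambda,u)\mapsto h(\lambda,u(\cdot))$ is $C^2$ from $K\times X$ to $Y$ (hence $h\in C^2(K\times U,V)$). (K2-4) $h_u(0,0)=0$, $h(\lambda,0)=0$ for $\lambda\in K$. (B1) $\dim\mathcal N(i-A_c)=1=\mathrm{codim}\,\mathcal R(i-A_c)$ and $\mathcal N(i-A_c)\setminus\{0\}$ is disjoint from $\mathcal R(i-A_c)$; hence $A_c+h_u(\lambda,0)$ has a $C^2$ eigenvalue branch $\mu(\lambda)$ with $\mu(0)=i$. (B2) $\mathrm{Re}\,\mu'(0)\neq0$. (B3) $ik\in\rho(A_c)$ for $k\in\mathbb Z\setminus\{\pm1\}$. *)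

theory Defs
  imports "HOL-Analysis.Analysis"
begin

section \<open>Complexification (V_c = V x V, U_c = U x U, x + iy represented as (x,y))\<close>

definition cmult :: "complex \<Rightarrow> 'a::real_vector \<times> 'a \<Rightarrow> 'a \<times> 'a" where
  "cmult z p = (Re z *\<^sub>R fst p - Im z *\<^sub>R snd p, Im z *\<^sub>R fst p + Re z *\<^sub>R snd p)"

definition embc :: "('u \<Rightarrow> 'v) \<Rightarrow> 'u \<times> 'u \<Rightarrow> 'v \<times> 'v" where
  "embc emb p = (emb (fst p), emb (snd p))"

definition opc :: "('u \<Rightarrow> 'v) \<Rightarrow> 'u \<times> 'u \<Rightarrow> 'v \<times> 'v" where
  "opc T p = (T (fst p), T (snd p))"

definition ikA :: "('u \<Rightarrow> 'v::real_vector) \<Rightarrow> ('u \<Rightarrow> 'v) \<Rightarrow> real \<Rightarrow> 'u \<times> 'u \<Rightarrow> 'v \<times> 'v" where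
  "ikA A emb k p = cmult (\<i> * complex_of_real k) (embc emb p) - opc A p"

definition cdim_one :: "('a::real_vector \<times> 'a) set \<Rightarrow> bool" where
  "cdim_one N \<longleftrightarrow> (\<exists>\<psi>. \<psi> \<noteq> 0 \<and> N = range (\<lambda>z. cmult z \<psi>))"

definition ccodim_one :: "('a::real_vector \<times> 'a) set \<Rightarrow> bool" where
  "ccodim_one R \<longleftrightarrow> (\<exists>\<phi>. (\<forall>z. cmult z \<phi> \<in> R \<longrightarrow> z = 0) \<and>
                          (\<forall>v. \<exists>r z. r \<in> R \<and> v = r + cmult z \<phi>))"

abbreviation Mper :: "real measure" where "Mper \<equiv> lebesgue_on {0..2*pi}"

definition strongly_meas :: "(real \<Rightarrow> 'a::topological_space) \<Rightarrow> bool" where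
  "strongly_meas u \<longleftrightarrow> (\<exists>s. (\<forall>n. simple_function Mper (s n)) \<and>
                        (AE t in Mper. (\<lambda>n. s n t) \<longlonglongrightarrow> u t))"

definition L2sp :: "(real \<Rightarrow> 'a::real_normed_vector) \<Rightarrow> bool" where
  "L2sp u \<longleftrightarrow> strongly_meas u \<and> integrable Mper (\<lambda>t. (norm (u t))\<^sup>2)"

definition l2n :: "(real \<Rightarrow> 'a::real_normed_vector) \<Rightarrow> real" where
  "l2n u = sqrt (integral\<^sup>L Mper (\<lambda>t. (norm (u t))\<^sup>2))"

definition per_test :: "(real \<Rightarrow> real) \<Rightarrow> bool" where
  "per_test \<phi> \<longleftrightarrow> (\<forall>t. \<phi> (t + 2*pi) = \<phi> t) \<and> (\<forall>k t. ((deriv ^^ k) \<phi>) differentiable (at t))"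

definition per_weak_deriv :: "(real \<Rightarrow> 'a::real_inner) \<Rightarrow> (real \<Rightarrow> 'a) \<Rightarrow> bool" where
  "per_weak_deriv u w \<longleftrightarrow> (\<forall>\<phi> e. per_test \<phi> \<longrightarrow>
      integral\<^sup>L Mper (\<lambda>t. deriv \<phi> t * inner e (u t)) = - integral\<^sup>L Mper (\<lambda>t. \<phi> t * inner e (w t)))"

text \<open>X = H^1_per((0,2 pi),V) \<inter> L^2((0,2 pi),U), U embedded in V via emb.\<close>
definition Xsp :: "('u::real_normed_vector \<Rightarrow> 'v::real_inner) \<Rightarrow> (real \<Rightarrow> 'u) set" where
  "Xsp emb = {u. L2sp u \<and> L2sp (emb \<circ> u) \<and> (\<exists>w. L2sp w \<and> per_weak_deriv (emb \<circ> u) w)}"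

definition Xn :: "('u::real_normed_vector \<Rightarrow> 'v::real_inner) \<Rightarrow> (real \<Rightarrow> 'u) \<Rightarrow> real" where
  "Xn emb u = l2n u + l2n (emb \<circ> u) + l2n (SOME w. L2sp w \<and> per_weak_deriv (emb \<circ> u) w)"

section \<open>C^2 maps from K x X to Y (Y = L^2((0,2 pi),V)), with respect to the seminorms\<close>

type_synonym ('u) pt = "real \<times> (real \<Rightarrow> 'u)"

definition padd :: "'u pt \<Rightarrow> 'u pt \<Rightarrow> ('u::real_vector) pt" where
  "padd p q = (fst p + fst q, \<lambda>t. snd p t + snd q t)"
definition psub :: "'u pt \<Rightarrow> 'u pt \<Rightarrow> ('u::real_vector) pt" where
  "psub p q = (fst p - fst q, \<lambda>t. snd p t - snd q t)"
definition psc :: "real \<Rightarrow> 'u pt \<Rightarrow> ('u::real_vector) pt" where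
  "psc c p = (c * fst p, \<lambda>t. c *\<^sub>R snd p t)"

definition Pn :: "('u::real_normed_vector \<Rightarrow> 'v::real_inner) \<Rightarrow> 'u pt \<Rightarrow> real" where
  "Pn emb p = \<bar>fst p\<bar> + Xn emb (snd p)"

definition PX :: "('u::real_normed_vector \<Rightarrow> 'v::real_inner) \<Rightarrow> 'u pt set" where
  "PX emb = UNIV \<times> Xsp emb"

text \<open>Bounded linear maps R x X \<rightarrow> Y (linearity modulo null functions).\<close>
definition blin :: "('u::real_normed_vector \<Rightarrow> 'v::real_inner) \<Rightarrow> ('u pt \<Rightarrow> real \<Rightarrow> 'v) \<Rightarrow> bool" where
  "blin emb T \<longleftrightarrow> (\<forall>p\<in>PX emb. L2sp (T p)) \<and>
     (\<forall>p\<in>PX emb. \<forall>q\<in>PX emb. \<forall>a b.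
        l2n (\<lambda>t. T (padd (psc a p) (psc b q)) t - (a *\<^sub>R T p t + b *\<^sub>R T q t)) = 0) \<and>
     (\<exists>C. \<forall>p\<in>PX emb. l2n (T p) \<le> C * Pn emb p)"

definition opn :: "('u::real_normed_vector \<Rightarrow> 'v::real_inner) \<Rightarrow> ('u pt \<Rightarrow> real \<Rightarrow> 'v) \<Rightarrow> real" where
  "opn emb T = Sup {l2n (T p) | p. p \<in> PX emb \<and> Pn emb p \<le> 1}"

definition bbil :: "('u::real_normed_vector \<Rightarrow> 'v::real_inner) \<Rightarrow> ('u pt \<Rightarrow> 'u pt \<Rightarrow> real \<Rightarrow> 'v) \<Rightarrow> bool" where
  "bbil emb B \<longleftrightarrow> (\<forall>p\<in>PX emb. blin emb (B p)) \<and> (\<forall>q\<in>PX emb. blin emb (\<lambda>p. B p q)) \<and>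
     (\<exists>C. \<forall>p\<in>PX emb. \<forall>q\<in>PX emb. l2n (B p q) \<le> C * Pn emb p * Pn emb q)"

definition opn2 :: "('u::real_normed_vector \<Rightarrow> 'v::real_inner) \<Rightarrow> ('u pt \<Rightarrow> 'u pt \<Rightarrow> real \<Rightarrow> 'v) \<Rightarrow> real" where
  "opn2 emb B = Sup {l2n (B p q) | p q. p \<in> PX emb \<and> q \<in> PX emb \<and> Pn emb p \<le> 1 \<and> Pn emb q \<le> 1}"

definition C2_XY :: "('u::real_normed_vector \<Rightarrow> 'v::real_inner) \<Rightarrow> 'u pt set \<Rightarrow> ('u pt \<Rightarrow> real \<Rightarrow> 'v) \<Rightarrow> bool" where
  "C2_XY emb D G \<longleftrightarrow> (\<exists>L1 L2. \<forall>p\<in>D.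
      blin emb (L1 p) \<and>
      (\<forall>\<epsilon>>0. \<exists>\<delta>>0. \<forall>q\<in>D. Pn emb (psub q p) < \<delta> \<longrightarrow>
          l2n (\<lambda>t. G q t - G p t - L1 p (psub q p) t) \<le> \<epsilon> * Pn emb (psub q p)) \<and>
      bbil emb (L2 p) \<and>
      (\<forall>\<epsilon>>0. \<exists>\<delta>>0. \<forall>q\<in>D. Pn emb (psub q p) < \<delta> \<longrightarrow>
          opn emb (\<lambda>r t. L1 q r t - L1 p r t - L2 p (psub q p) r t) \<le> \<epsilon> * Pn emb (psub q p)) \<and>
      (\<forall>\<epsilon>>0. \<exists>\<delta>>0. \<forall>q\<in>D. Pn emb (psub q p) < \<delta> \<longrightarrow>
          opn2 emb (\<lambda>r s t. L2 q r s t - L2 p r s t) \<le> \<epsilon>))"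

end

theory Submission
  imports Defs
begin


lemma om_baire:
  fixes f :: "'a::{real_normed_vector,complete_space} \<Rightarrow> 'b::{real_normed_vector,complete_space}"
  assumes lf: "linear f" and sf: "surj f"
  shows "\<exists>M\<ge>0. \<forall>y e. e > 0 \<longrightarrow> (\<exists>x. norm x \<le> M * norm y \<and> norm (f x - y) < e)"
proof -
  let ?C = "\<lambda>n::nat. closure (f ` ball 0 (real n))"
  have "\<exists>n. interior (?C n) \<noteq> {}"
  proof (rule ccontr)
    assume "\<nexists>n. interior (?C n) \<noteq> {}"
    then have emp: "\<And>n. interior (?C n) = {}" by blast
    have "euclidean interior_of \<Union>(range ?C) = {}"
      by (rule Baire_category_alt) (auto simp: completely_metrizable_space_euclidean emp)
    moreover have "\<Union>(range ?C) = UNIV"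
    proof -
      { fix y :: 'b
        obtain x where x: "y = f x" using sf by (metis surjD)
        obtain n :: nat where "norm x < real n" using reals_Archimedean2 by blast
        then have "y \<in> ?C n" using x closure_subset by fastforce
        then have "y \<in> \<Union>(range ?C)" by blast }
      then show ?thesis by blast
    qed
    ultimately show False by simp
  qed
  then obtain n y0 where "y0 \<in> interior (?C n)" by blast
  then obtain r where r: "r > 0" "ball y0 r \<subseteq> ?C n"
    by (meson open_contains_ball open_interior interior_subset subset_trans)
  have approx: "\<exists>x. norm x < 2 * real n \<and> norm (f x - y) < e" if "norm y < r" "e > 0" for y e
  proof -
    have "y0 + y \<in> ?C n" using r that by (auto simp: dist_norm)
    then obtain x1 where x1: "x1 \<in> ball 0 (real n)" "dist (f x1) (y0 + y) < e/2"
      using closure_approachable[of "y0+y" "f ` ball 0 (real n)"] \<open>e>0\<close>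
      by (metis half_gt_zero image_iff)
    have "y0 \<in> ?C n" using r by auto
    then obtain x2 where x2: "x2 \<in> ball 0 (real n)" "dist (f x2) y0 < e/2"
      using closure_approachable[of "y0" "f ` ball 0 (real n)"] \<open>e>0\<close>
      by (metis half_gt_zero image_iff)
    have nn: "norm (x1 - x2) < 2 * real n"
      using x1 x2 norm_triangle_ineq4[of x1 x2] by auto
    have "f (x1 - x2) - y = (f x1 - (y0 + y)) - (f x2 - y0)"
      using linear_diff[OF lf] by (simp add: algebra_simps)
    then have "norm (f (x1 - x2) - y) \<le> norm (f x1 - (y0 + y)) + norm (f x2 - y0)"
      by (metis norm_triangle_ineq4)
    moreover have "norm (f x1 - (y0 + y)) < e/2" "norm (f x2 - y0) < e/2"
      using x1 x2 by (auto simp: dist_norm)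
    ultimately have "norm (f (x1 - x2) - y) < e" by linarith
    then show ?thesis using nn by blast
  qed
  define M where "M = 4 * real n / r"
  have "M \<ge> 0" using r by (simp add: M_def)
  moreover have "\<exists>x. norm x \<le> M * norm y \<and> norm (f x - y) < e" if "e > 0" for y e
  proof (cases "y = 0")
    case True
    then show ?thesis using that linear_0[OF lf] by (intro exI[of _ 0]) auto
  next
    case False
    define c where "c = r / (2 * norm y)"
    have c: "c > 0" using False r by (simp add: c_def)
    have "norm (c *\<^sub>R y) < r" using False r by (simp add: c_def)
    then obtain x' where x': "norm x' < 2 * real n" "norm (f x' - c *\<^sub>R y) < e * c"
      using approx c \<open>e>0\<close> by (meson mult_pos_pos)
    define x where "x = (1/c) *\<^sub>R x'"
    have "norm x = norm x' / c" using c by (simp add: x_def)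
    also have "\<dots> \<le> 2 * real n / c" using x' c by (simp add: divide_right_mono)
    also have "\<dots> = M * norm y" using False r by (simp add: c_def M_def field_simps)
    finally have n1: "norm x \<le> M * norm y" .
    have "f x - y = (1/c) *\<^sub>R (f x' - c *\<^sub>R y)"
      using c by (simp add: x_def linear_scale[OF lf] algebra_simps)
    then have "norm (f x - y) = norm (f x' - c *\<^sub>R y) / c" using c by simp
    also have "\<dots> < e" using x' c by (simp add: divide_less_eq)
    finally show ?thesis using n1 by blast
  qed
  ultimately show ?thesis by blast
qed

lemma om_iter:
  fixes f :: "'a::{real_normed_vector,complete_space} \<Rightarrow> 'b::{real_normed_vector,complete_space}"
  assumes lf: "linear f" and cl: "closed (range (\<lambda>x. (x, f x)))" and M: "M \<ge> 0"
    and ap: "\<forall>y e. e > 0 \<longrightarrow> (\<exists>x. norm x \<le> M * norm y \<and> norm (f x - y) < e)"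
  shows "\<exists>x. f x = y \<and> norm x \<le> 2 * M * norm y"
proof -
  have "\<exists>x. norm x \<le> M * norm z \<and> norm (f x - z) \<le> norm z / 2" for z
  proof (cases "z = 0")
    case True then show ?thesis using linear_0[OF lf] by (intro exI[of _ 0]) auto
  next
    case False then show ?thesis using ap[rule_format, of "norm z / 2" z] by force
  qed
  then obtain g where g: "\<And>z. norm (g z) \<le> M * norm z" "\<And>z. norm (f (g z) - z) \<le> norm z / 2"
    by metis
  define r where "r = rec_nat y (\<lambda>_ z. z - f (g z))"
  have r0: "r 0 = y" and rS: "\<And>k. r (Suc k) = r k - f (g (r k))" by (simp_all add: r_def)
  have nr: "norm (r k) \<le> norm y * (1/2)^k" for k
  proof (induction k)
    case 0 then show ?case by (simp add: r0)
  next
    case (Suc k)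
    have "norm (r (Suc k)) = norm (f (g (r k)) - r k)" by (simp add: rS norm_minus_commute)
    also have "\<dots> \<le> norm (r k) / 2" by (rule g(2))
    also have "\<dots> \<le> norm y * (1/2)^Suc k" using Suc by simp
    finally show ?case .
  qed
  define s where "s n = (\<Sum>k<n. g (r k))" for n
  have fs: "f (s n) = y - r n" for n
  proof (induction n)
    case 0 then show ?case by (simp add: s_def r0 linear_0[OF lf])
  next
    case (Suc n)
    have "f (s (Suc n)) = f (s n) + f (g (r n))" by (simp add: s_def linear_add[OF lf])
    then show ?case using Suc by (simp add: rS)
  qed
  have nx: "norm (g (r k)) \<le> M * norm y * (1/2)^k" for k
    using g(1)[of "r k"] nr[of k] M by (smt (verit) mult.assoc mult_left_mono)
  have sj: "norm (s (n+j) - s n) \<le> 2 * M * norm y * ((1/2)^n - (1/2)^(n+j))" for n j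
  proof (induction j)
    case 0 then show ?case by simp
  next
    case (Suc j)
    have "s (n + Suc j) - s n = (s (n+j) - s n) + g (r (n+j))" by (simp add: s_def)
    then have "norm (s (n + Suc j) - s n) \<le> norm (s (n+j) - s n) + norm (g (r (n+j)))"
      by (metis norm_triangle_ineq)
    also have "\<dots> \<le> 2 * M * norm y * ((1/2)^n - (1/2)^(n+j)) + M * norm y * (1/2)^(n+j)"
      using Suc nx[of "n+j"] by linarith
    also have "\<dots> = 2 * M * norm y * ((1/2)^n - (1/2)^(n + Suc j))" by (simp add: algebra_simps)
    finally show ?case .
  qed
  have My: "0 \<le> 2 * M * norm y" using M by simp
  have smn: "norm (s m - s n) \<le> 2 * M * norm y * (1/2)^n" if nm: "n \<le> m" for m n
  proof -
    obtain j where mj: "m = n + j" using le_Suc_ex[OF nm] by blast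
    have "norm (s m - s n) \<le> 2 * M * norm y * ((1/2)^n - (1/2)^(n+j))" unfolding mj by (rule sj)
    also have "(1/2::real)^n - (1/2)^(n+j) \<le> (1/2)^n" by simp
    then have "2 * M * norm y * ((1/2::real)^n - (1/2)^(n+j)) \<le> 2 * M * norm y * (1/2)^n"
      by (rule mult_left_mono[OF _ My])
    finally show ?thesis .
  qed
  have "Cauchy s"
  proof (rule CauchyI)
    fix e :: real assume e0: "e > 0"
    define B where "B = 2 * M * norm y + 1"
    have B: "B > 0" using My by (simp add: B_def)
    have eB: "e / B > 0" using e0 B by simp
    obtain N where N: "(1/2::real)^N < e / B"
      using real_arch_pow_inv[OF eB, of "1/2::real"] by force
    have key: "norm (s a - s b) < e" if ab: "b \<le> a" "N \<le> b" for a b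
    proof -
      have "norm (s a - s b) \<le> 2 * M * norm y * (1/2)^b" by (rule smn[OF ab(1)])
      also have "(1/2::real)^b \<le> (1/2)^N" by (rule power_decreasing[OF ab(2)]) auto
      then have "2 * M * norm y * (1/2)^b \<le> 2 * M * norm y * (1/2)^N"
        by (rule mult_left_mono[OF _ My])
      also have "2 * M * norm y * (1/2::real)^N \<le> B * (1/2)^N" unfolding B_def
        by (rule mult_right_mono) auto
      also have "B * (1/2::real)^N < B * (e / B)" using N B by (rule mult_strict_left_mono)
      also have "B * (e / B) = e" using B by simp
      finally show ?thesis .
    qed
    have "norm (s m - s n) < e" if mn: "N \<le> m" "N \<le> n" for m n
    proof (cases "n \<le> m")
      case True then show ?thesis using key mn(2) by blast
    next
      case False
      then have "norm (s n - s m) < e" using key mn(1) by simp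
      then show ?thesis by (metis norm_minus_commute)
    qed
    then show "\<exists>N. \<forall>m\<ge>N. \<forall>n\<ge>N. norm (s m - s n) < e" by blast
  qed
  then obtain x where sx: "s \<longlonglongrightarrow> x" using Cauchy_convergent convergent_def by blast
  have sb: "norm (s n) \<le> 2 * M * norm y" for n
    using smn[of 0 n] by (simp add: s_def)
  have nxb: "norm x \<le> 2 * M * norm y"
    by (rule LIMSEQ_le_const2[OF tendsto_norm[OF sx]]) (use sb in auto)
  have "r \<longlonglongrightarrow> 0"
  proof (rule Lim_null_comparison[where g="\<lambda>k. norm y * (1/2)^k"])
    show "\<forall>\<^sub>F k in sequentially. norm (r k) \<le> norm y * (1/2)^k" using nr by simp
    show "(\<lambda>k. norm y * (1/2::real)^k) \<longlonglongrightarrow> 0"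
      by (intro tendsto_mult_right_zero LIMSEQ_power_zero) auto
  qed
  then have "(\<lambda>n. f (s n)) \<longlonglongrightarrow> y" unfolding fs using tendsto_diff[of "\<lambda>_. y" y sequentially r 0] by simp
  then have "(\<lambda>n. (s n, f (s n))) \<longlonglongrightarrow> (x, y)" using sx by (intro tendsto_Pair)
  then have "(x, y) \<in> range (\<lambda>x. (x, f x))"
    by (rule closed_sequentially[OF cl, rotated]) auto
  then have "f x = y" by auto
  then show ?thesis using nxb by blast
qed

lemma open_mapping_closed:
  fixes f :: "'a::{real_normed_vector,complete_space} \<Rightarrow> 'b::{real_normed_vector,complete_space}"
  assumes lf: "linear f" and sf: "surj f" and cl: "closed (range (\<lambda>x. (x, f x)))"
  shows "\<exists>C. \<forall>y. \<exists>x. f x = y \<and> norm x \<le> C * norm y"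
proof -
  obtain M where "M \<ge> 0" "\<forall>y e. e > 0 \<longrightarrow> (\<exists>x. norm x \<le> M * norm y \<and> norm (f x - y) < e)"
    using om_baire[OF lf sf] by blast
  then show ?thesis using om_iter[OF lf cl] by blast
qed


lemma cmult_pair: "cmult z (x, y) = (Re z *\<^sub>R x - Im z *\<^sub>R y, Im z *\<^sub>R x + Re z *\<^sub>R y)"
  by (simp add: cmult_def)

lemma cmult_add_left: "cmult (z + w) p = cmult z p + cmult w p"
  by (cases p) (simp add: cmult_def algebra_simps)

lemma cmult_diff_left: "cmult (z - w) p = cmult z p - cmult w p"
  by (cases p) (simp add: cmult_def algebra_simps)

lemma cmult_add_right: "cmult z (p + q) = cmult z p + cmult z q"
  by (cases p, cases q) (simp add: cmult_def algebra_simps)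

lemma cmult_diff_right: "cmult z (p - q) = cmult z p - cmult z q"
  by (cases p, cases q) (simp add: cmult_def algebra_simps)

lemma cmult_scaleR_right: "cmult z (r *\<^sub>R p) = r *\<^sub>R cmult z p"
  by (cases p) (simp add: cmult_def algebra_simps)

lemma cmult_scaleR_left: "cmult (r *\<^sub>R z) p = r *\<^sub>R cmult z p"
  by (cases p) (simp add: cmult_def algebra_simps)

lemma cmult_of_real: "cmult (complex_of_real r) p = r *\<^sub>R p"
  by (cases p) (simp add: cmult_def)

lemma cmult_mult: "cmult z (cmult w p) = cmult (z * w) p"
  by (cases p) (simp add: cmult_def algebra_simps)

lemma cmult_one[simp]: "cmult 1 p = p"
  by (cases p) (simp add: cmult_def)

lemma cmult_zero_left[simp]: "cmult 0 p = 0"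
  by (cases p) (simp add: cmult_def zero_prod_def)

lemma cmult_zero_right[simp]: "cmult z 0 = 0"
  by (simp add: cmult_def zero_prod_def)

lemma cmult_ii: "cmult \<i> (x, y) = (- y, x)"
  by (simp add: cmult_def)

lemma tendsto_cmult:
  fixes \<phi> :: "'a::real_normed_vector \<times> 'a"
  assumes "(z \<longlongrightarrow> z0) F"
  shows "((\<lambda>n. cmult (z n) \<phi>) \<longlongrightarrow> cmult z0 \<phi>) F"
  unfolding cmult_def
  by (intro tendsto_intros assms)

lemma ell_exists:
  fixes T :: "'a::{real_normed_vector,complete_space} \<times> 'a \<Rightarrow> 'b::{real_normed_vector,complete_space} \<times> 'b"
  assumes lT: "linear T" and cT: "\<And>z p. T (cmult z p) = cmult z (T p)"
    and clT: "closed (range (\<lambda>p. (p, T p)))" and cc: "ccodim_one (range T)"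
  shows "\<exists>ell::'b \<times> 'b \<Rightarrow> complex. bounded_linear ell \<and> (\<forall>z v. ell (cmult z v) = z * ell v) \<and>
           (\<forall>v. ell v = 0 \<longleftrightarrow> v \<in> range T)"
proof -
  obtain \<phi> where \<phi>1: "\<And>z. cmult z \<phi> \<in> range T \<Longrightarrow> z = 0"
    and \<phi>2: "\<And>v. \<exists>r z. r \<in> range T \<and> v = r + cmult z \<phi>"
    using cc unfolding ccodim_one_def by blast
  define F where "F x = T (fst x) + cmult (snd x) \<phi>" for x :: "('a \<times> 'a) \<times> complex"
  have lF: "linear F"
    unfolding F_def
    by (rule linearI) (auto simp: linear_add[OF lT] linear_scale[OF lT] cmult_add_left cmult_scaleR_left scaleR_right_distrib)
  have sF: "surj F"
  proof -
    have "v \<in> range F" for v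
    proof -
      obtain r z where "r \<in> range T" "v = r + cmult z \<phi>" using \<phi>2 by blast
      then obtain p where "v = T p + cmult z \<phi>" by blast
      then have "v = F (p, z)" by (simp add: F_def)
      then show ?thesis by blast
    qed
    then show ?thesis by blast
  qed
  have clF: "closed (range (\<lambda>x. (x, F x)))"
    unfolding closed_sequential_limits
  proof (intro allI impI, elim conjE)
    fix X l
    assume X: "\<forall>n. X n \<in> range (\<lambda>x. (x, F x))" and Xl: "X \<longlonglongrightarrow> l"
    have X2: "snd (X n) = F (fst (X n))" for n
    proof -
      obtain x where "X n = (x, F x)" using X by blast
      then show ?thesis by simp
    qed
    have t1: "(\<lambda>n. fst (X n)) \<longlonglongrightarrow> fst l" using Xl by (rule tendsto_fst)
    have t2: "(\<lambda>n. snd (X n)) \<longlonglongrightarrow> snd l" using Xl by (rule tendsto_snd)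
    have tp: "(\<lambda>n. fst (fst (X n))) \<longlonglongrightarrow> fst (fst l)" using t1 by (rule tendsto_fst)
    have tz: "(\<lambda>n. snd (fst (X n))) \<longlonglongrightarrow> snd (fst l)" using t1 by (rule tendsto_snd)
    have tc: "(\<lambda>n. cmult (snd (fst (X n))) \<phi>) \<longlonglongrightarrow> cmult (snd (fst l)) \<phi>"
      by (rule tendsto_cmult[OF tz])
    have "(\<lambda>n. snd (X n) - cmult (snd (fst (X n))) \<phi>) \<longlonglongrightarrow> snd l - cmult (snd (fst l)) \<phi>"
      by (intro tendsto_diff t2 tc)
    moreover have "snd (X n) - cmult (snd (fst (X n))) \<phi> = T (fst (fst (X n)))" for n
      using X2[of n] by (simp add: F_def)
    ultimately have tT: "(\<lambda>n. T (fst (fst (X n)))) \<longlonglongrightarrow> snd l - cmult (snd (fst l)) \<phi>" by simp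
    have tPT: "(\<lambda>n. (fst (fst (X n)), T (fst (fst (X n))))) \<longlonglongrightarrow> (fst (fst l), snd l - cmult (snd (fst l)) \<phi>)"
      by (intro tendsto_Pair tp tT)
    have inR: "\<And>n. (fst (fst (X n)), T (fst (fst (X n)))) \<in> range (\<lambda>p. (p, T p))"
      by (rule rangeI)
    have "(fst (fst l), snd l - cmult (snd (fst l)) \<phi>) \<in> range (\<lambda>p. (p, T p))"
      by (rule closed_sequentially[OF clT inR tPT])
    then obtain p where "(fst (fst l), snd l - cmult (snd (fst l)) \<phi>) = (p, T p)" by (rule rangeE)
    then have "T (fst (fst l)) = snd l - cmult (snd (fst l)) \<phi>" by simp
    then have "snd l = F (fst l)" by (simp add: F_def)
    then have "l = (\<lambda>x. (x, F x)) (fst l)" by (simp add: prod_eq_iff)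
    then show "l \<in> range (\<lambda>x. (x, F x))" by (rule image_eqI) simp
  qed
  from open_mapping_closed[OF lF sF clF] obtain C where C: "\<forall>y. \<exists>x. F x = y \<and> norm x \<le> C * norm y"
    by blast
  have Rsub: "a - b \<in> range T" if ab: "a \<in> range T" "b \<in> range T" for a b
  proof -
    from ab(1) obtain x where x: "a = T x" by (rule rangeE)
    from ab(2) obtain y where y: "b = T y" by (rule rangeE)
    have "a - b = T (x - y)" by (simp add: x y linear_diff[OF lT])
    then show ?thesis by simp
  qed
  have Radd: "a + b \<in> range T" if ab: "a \<in> range T" "b \<in> range T" for a b
  proof -
    from ab(1) obtain x where x: "a = T x" by (rule rangeE)
    from ab(2) obtain y where y: "b = T y" by (rule rangeE)
    have "a + b = T (x + y)" by (simp add: x y linear_add[OF lT])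
    then show ?thesis by simp
  qed
  have Rscale: "r *\<^sub>R a \<in> range T" if ab: "a \<in> range T" for a r
  proof -
    from ab(1) obtain x where x: "a = T x" by (rule rangeE)
    have "r *\<^sub>R a = T (r *\<^sub>R x)" by (simp add: x linear_scale[OF lT])
    then show ?thesis by simp
  qed
  have Rcm: "cmult w a \<in> range T" if ab: "a \<in> range T" for a w
  proof -
    from ab(1) obtain x where x: "a = T x" by (rule rangeE)
    have "cmult w a = T (cmult w x)" by (simp add: x cT)
    then show ?thesis by simp
  qed
  have uniq: "z = z'" if zz: "v - cmult z \<phi> \<in> range T" "v - cmult z' \<phi> \<in> range T" for v z z'
  proof -
    have "(v - cmult z \<phi>) - (v - cmult z' \<phi>) \<in> range T" by (rule Rsub[OF zz])
    then have "cmult (z' - z) \<phi> \<in> range T" by (simp add: cmult_diff_left)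
    then have "z' - z = 0" by (rule \<phi>1)
    then show ?thesis by simp
  qed
  have ex: "\<exists>z. v - cmult z \<phi> \<in> range T" for v
  proof -
    obtain r z where "r \<in> range T" "v = r + cmult z \<phi>" using \<phi>2 by blast
    then show ?thesis by (intro exI[of _ z]) simp
  qed
  define ell where "ell v = (THE z. v - cmult z \<phi> \<in> range T)" for v
  have ell1: "v - cmult (ell v) \<phi> \<in> range T" for v
  proof -
    obtain z where z: "v - cmult z \<phi> \<in> range T" using ex by blast
    have "ell v = z" unfolding ell_def
      by (rule the_equality[where P="\<lambda>z. v - cmult z \<phi> \<in> range T", OF z uniq[OF _ z]])
    then show ?thesis using z by simp
  qed
  have elleq: "ell v = z" if "v - cmult z \<phi> \<in> range T" for v z
    using uniq[OF ell1 that] .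
  have elladd: "ell (v + w) = ell v + ell w" for v w
  proof (rule elleq)
    have "(v - cmult (ell v) \<phi>) + (w - cmult (ell w) \<phi>) \<in> range T" by (rule Radd[OF ell1 ell1])
    moreover have "(v - cmult (ell v) \<phi>) + (w - cmult (ell w) \<phi>) = v + w - cmult (ell v + ell w) \<phi>"
      by (simp add: cmult_add_left)
    ultimately show "v + w - cmult (ell v + ell w) \<phi> \<in> range T" by simp
  qed
  have ellscale: "ell (r *\<^sub>R v) = r *\<^sub>R ell v" for r v
  proof (rule elleq)
    have "r *\<^sub>R (v - cmult (ell v) \<phi>) \<in> range T" by (rule Rscale[OF ell1])
    moreover have "r *\<^sub>R (v - cmult (ell v) \<phi>) = r *\<^sub>R v - cmult (r *\<^sub>R ell v) \<phi>"
      by (simp add: cmult_scaleR_left scaleR_diff_right)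
    ultimately show "r *\<^sub>R v - cmult (r *\<^sub>R ell v) \<phi> \<in> range T" by simp
  qed
  have ellcm: "ell (cmult w v) = w * ell v" for w v
  proof (rule elleq)
    have "cmult w (v - cmult (ell v) \<phi>) \<in> range T" by (rule Rcm[OF ell1])
    moreover have "cmult w (v - cmult (ell v) \<phi>) = cmult w v - cmult (w * ell v) \<phi>"
      by (simp add: cmult_diff_right cmult_mult)
    ultimately show "cmult w v - cmult (w * ell v) \<phi> \<in> range T" by simp
  qed
  have ellbd: "norm (ell v) \<le> norm v * C" for v
  proof -
    obtain x where x: "F x = v" "norm x \<le> C * norm v" using C[rule_format, of v] by blast
    have "v - cmult (snd x) \<phi> = T (fst x)" using x(1) by (auto simp: F_def)
    then have "ell v = snd x" by (intro elleq) auto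
    then have "norm (ell v) \<le> norm x" using norm_snd_le[of "snd x" "fst x"] by simp
    then show ?thesis using x(2) by (simp add: mult.commute)
  qed
  have "bounded_linear ell" by (rule bounded_linear_intro[OF elladd ellscale ellbd])
  moreover have "ell v = 0 \<longleftrightarrow> v \<in> range T" for v
  proof
    assume "ell v = 0" then show "v \<in> range T" using ell1[of v] by simp
  next
    assume "v \<in> range T" then show "ell v = 0" by (intro elleq) simp
  qed
  ultimately show ?thesis using ellcm by blast
qed


lemma ikA1_eq: "ikA A emb 1 p = (- emb (snd p) - A (fst p), emb (fst p) - A (snd p))"
  by (cases p) (simp add: ikA_def cmult_def embc_def opc_def)

lemma opc_pair: "opc f (x, y) = (f x, f y)"
  by (simp add: opc_def)

lemma embc_eq_opc: "embc f = opc f"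
  by (simp add: embc_def opc_def fun_eq_iff)

lemma opc_cmult:
  assumes "linear f"
  shows "opc f (cmult z p) = cmult z (opc f p)"
  by (cases p) (simp add: opc_def cmult_def linear_diff[OF assms] linear_add[OF assms] linear_scale[OF assms])

lemma opc_add_fun: "opc (\<lambda>v. f v + g v) p = opc f p + opc g p"
  by (cases p) (simp add: opc_def)

lemma iso_bounded_linear:
  assumes "linear A" "\<And>u. norm (A u) = norm u"
  shows "bounded_linear A"
proof (rule bounded_linear_intro[where K=1])
  show "A (x + y) = A x + A y" for x y by (rule linear_add[OF assms(1)])
  show "A (r *\<^sub>R x) = r *\<^sub>R A x" for r x by (rule linear_scale[OF assms(1)])
  show "norm (A x) \<le> norm x * 1" for x using assms(2) by simp
qed

lemma T_linear:
  assumes le: "linear emb" and lA: "linear A"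
  shows "linear (ikA A emb 1)"
proof (rule linearI)
  show "ikA A emb 1 (x + y) = ikA A emb 1 x + ikA A emb 1 y" for x y
    by (simp add: ikA1_eq linear_add[OF le] linear_add[OF lA])
  show "ikA A emb 1 (r *\<^sub>R x) = r *\<^sub>R ikA A emb 1 x" for r x
    by (simp add: ikA1_eq linear_scale[OF le] linear_scale[OF lA] scaleR_diff_right)
qed

lemma T_cmult:
  assumes le: "linear emb" and lA: "linear A"
  shows "ikA A emb 1 (cmult z p) = cmult z (ikA A emb 1 p)"
proof -
  obtain a b where p: "p = (a, b)" by (cases p)
  show ?thesis
    by (simp add: p ikA1_eq cmult_def linear_diff[OF le] linear_add[OF le] linear_scale[OF le]
        linear_diff[OF lA] linear_add[OF lA] linear_scale[OF lA] algebra_simps)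
qed

lemma T_closed:
  fixes A emb :: "'u::real_normed_vector \<Rightarrow> 'v::real_normed_vector"
  assumes lA: "linear A" and iso: "\<And>u. norm (A u) = norm u"
    and cl: "closed (range (\<lambda>u. (emb u, A u)))" and injA: "inj A"
  shows "closed (range (\<lambda>p. (p, ikA A emb 1 p)))"
  unfolding closed_sequential_limits
proof (intro allI impI, elim conjE)
  fix X l
  assume X: "\<forall>n. X n \<in> range (\<lambda>p. (p, ikA A emb 1 p))" and Xl: "X \<longlonglongrightarrow> l"
  have bA: "bounded_linear A" by (rule iso_bounded_linear[OF lA iso])
  define a where "a n = fst (fst (X n))" for n
  define b where "b n = snd (fst (X n))" for n
  define w1 where "w1 n = fst (snd (X n))" for n
  define w2 where "w2 n = snd (snd (X n))" for n
  have Xe: "w1 n = - emb (b n) - A (a n) \<and> w2 n = emb (a n) - A (b n)" for n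
  proof -
    from X obtain p where "X n = (p, ikA A emb 1 p)" by blast
    then show ?thesis by (simp add: a_def b_def w1_def w2_def ikA1_eq)
  qed
  have ta: "a \<longlonglongrightarrow> fst (fst l)" unfolding a_def by (intro tendsto_fst Xl)
  have tb: "b \<longlonglongrightarrow> snd (fst l)" unfolding b_def by (intro tendsto_snd tendsto_fst Xl)
  have tw1: "w1 \<longlonglongrightarrow> fst (snd l)" unfolding w1_def by (intro tendsto_fst tendsto_snd Xl)
  have tw2: "w2 \<longlonglongrightarrow> snd (snd l)" unfolding w2_def by (intro tendsto_snd Xl)
  have tAa: "(\<lambda>n. A (a n)) \<longlonglongrightarrow> A (fst (fst l))" by (rule bounded_linear.tendsto[OF bA ta])
  have tAb: "(\<lambda>n. A (b n)) \<longlonglongrightarrow> A (snd (fst l))" by (rule bounded_linear.tendsto[OF bA tb])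
  have ea: "emb (a n) = w2 n + A (b n)" for n using Xe[of n] by simp
  have eb: "emb (b n) = - w1 n - A (a n)" for n using Xe[of n] by simp
  have tea: "(\<lambda>n. emb (a n)) \<longlonglongrightarrow> snd (snd l) + A (snd (fst l))"
    unfolding ea by (intro tendsto_add tw2 tAb)
  have teb: "(\<lambda>n. emb (b n)) \<longlonglongrightarrow> - fst (snd l) - A (fst (fst l))"
    unfolding eb by (intro tendsto_diff tendsto_minus tw1 tAa)
  have inG: "\<And>n. (emb (c n), A (c n)) \<in> range (\<lambda>u. (emb u, A u))" for c :: "nat \<Rightarrow> 'u"
    by (rule rangeI)
  have "(snd (snd l) + A (snd (fst l)), A (fst (fst l))) \<in> range (\<lambda>u. (emb u, A u))"
    by (rule closed_sequentially[OF cl inG[of a] tendsto_Pair[OF tea tAa]])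
  then obtain u where u: "(snd (snd l) + A (snd (fst l)), A (fst (fst l))) = (emb u, A u)" by (rule rangeE)
  then have "u = fst (fst l)" using injA by (simp add: inj_eq)
  with u have Ea: "emb (fst (fst l)) = snd (snd l) + A (snd (fst l))" by simp
  have "(- fst (snd l) - A (fst (fst l)), A (snd (fst l))) \<in> range (\<lambda>u. (emb u, A u))"
    by (rule closed_sequentially[OF cl inG[of b] tendsto_Pair[OF teb tAb]])
  then obtain u' where u': "(- fst (snd l) - A (fst (fst l)), A (snd (fst l))) = (emb u', A u')" by (rule rangeE)
  then have "u' = snd (fst l)" using injA by (simp add: inj_eq)
  with u' have Eb: "emb (snd (fst l)) = - fst (snd l) - A (fst (fst l))" by simp
  have "ikA A emb 1 (fst l) = snd l"
    by (simp add: ikA1_eq Ea Eb prod_eq_iff)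
  then have "l = (\<lambda>p. (p, ikA A emb 1 p)) (fst l)" by (simp add: prod_eq_iff)
  then show "l \<in> range (\<lambda>p. (p, ikA A emb 1 p))" by (rule image_eqI) simp
qed


lemma key_B2:
  fixes A :: "'u::real_normed_vector \<Rightarrow> 'v::real_normed_vector" and emb :: "'u \<Rightarrow> 'v"
    and D1 :: "real \<times> 'u \<Rightarrow> (real \<times> 'u) \<Rightarrow>\<^sub>L 'v"
    and D2 :: "real \<times> 'u \<Rightarrow> (real \<times> 'u) \<Rightarrow>\<^sub>L ((real \<times> 'u) \<Rightarrow>\<^sub>L 'v)"
    and ell :: "'v \<times> 'v \<Rightarrow> complex" and \<psi>s :: "'u \<times> 'u" and K :: "real set"
  assumes le: "linear emb" and lA: "linear A" and iso: "\<And>u. norm (A u) = norm u"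
    and bl: "bounded_linear ell"
    and ellcm: "\<And>z v. ell (cmult z v) = z * ell v"
    and ellT: "\<And>p. ell (ikA A emb 1 p) = 0"
    and hD2: "(D1 has_derivative blinfun_apply (D2 (0,0))) (at (0,0))"
    and K24a: "\<forall>v. blinfun_apply (D1 (0, 0)) (0, v) = 0"
    and B2: "\<exists>\<epsilon>>0. \<exists>\<mu>::real \<Rightarrow> complex. \<exists>\<psi>::real \<Rightarrow> 'u \<times> 'u.
              ball 0 \<epsilon> \<subseteq> K \<and>
              (\<forall>la\<in>ball 0 \<epsilon>. \<psi> la \<noteq> 0 \<and>
                 opc (\<lambda>v. A v + blinfun_apply (D1 (la, 0)) (0, v)) (\<psi> la) = cmult (\<mu> la) (embc emb (\<psi> la))) \<and>
              continuous (at 0) \<psi> \<and> \<mu> 0 = \<i> \<and> (\<exists>dmu. (\<mu> has_vector_derivative dmu) (at 0) \<and> Re dmu \<noteq> 0)"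
    and kerS: "\<And>q. ikA A emb 1 q = 0 \<Longrightarrow> \<exists>z. q = cmult z \<psi>s"
  shows "\<exists>dmu. Re dmu \<noteq> 0 \<and> dmu * ell (embc emb \<psi>s) =
            ell (opc (\<lambda>v. blinfun_apply (blinfun_apply (D2 (0, 0)) (1, 0)) (0, v)) \<psi>s)"
proof -
  obtain \<epsilon> \<mu> \<psi> dmu where ep: "\<epsilon> > 0"
    and eig: "\<And>la. la \<in> ball 0 \<epsilon> \<Longrightarrow> \<psi> la \<noteq> 0 \<and>
                 opc (\<lambda>v. A v + blinfun_apply (D1 (la, 0)) (0, v)) (\<psi> la) = cmult (\<mu> la) (embc emb (\<psi> la))"
    and c\<psi>: "continuous (at 0) \<psi>" and \<mu>0: "\<mu> 0 = \<i>"
    and dmu: "(\<mu> has_vector_derivative dmu) (at 0)" and Rdmu: "Re dmu \<noteq> 0"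
    using B2 by blast
  define F0 where "F0 = blinfun_apply (D2 (0,0)) (1,0)"
  define f0 where "f0 v = blinfun_apply F0 (0, v)" for v
  define B where "B la v = blinfun_apply (D1 (la, 0)) (0, v)" for la v
  have ellL: "linear ell" using bl by (rule bounded_linear.linear)
  have bA: "bounded_linear A" by (rule iso_bounded_linear[OF lA iso])
  have bf0: "bounded_linear f0" unfolding f0_def
    by (intro bounded_linear_compose[OF blinfun.bounded_linear_right] bounded_linear_Pair
        bounded_linear_zero bounded_linear_ident)
  have lf0: "linear f0" using bf0 by (rule bounded_linear.linear)
  have Tform: "ikA A emb 1 p = cmult \<i> (embc emb p) - opc A p" for p
    by (simp add: ikA_def)
  have Eeq0: "\<i> * ell (embc emb p) = ell (opc A p)" for p
  proof -
    have "0 = ell (cmult \<i> (embc emb p) - opc A p)" using ellT[of p] by (simp add: Tform)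
    also have "\<dots> = \<i> * ell (embc emb p) - ell (opc A p)" by (simp add: linear_diff[OF ellL] ellcm)
    finally show ?thesis by simp
  qed
  have Eeq: "ell (embc emb p) = - \<i> * ell (opc A p)" for p
  proof -
    have "- \<i> * (\<i> * ell (embc emb p)) = - \<i> * ell (opc A p)" by (simp only: Eeq0)
    then show ?thesis by simp
  qed
  have eqla: "(\<mu> la - \<i>) * ell (embc emb (\<psi> la)) = ell (opc (B la) (\<psi> la))" if la: "la \<in> ball 0 \<epsilon>" for la
  proof -
    have "opc (\<lambda>v. A v + blinfun_apply (D1 (la, 0)) (0, v)) (\<psi> la) = cmult (\<mu> la) (embc emb (\<psi> la))"
      using eig[OF la] by blast
    then have "opc A (\<psi> la) + opc (B la) (\<psi> la) = cmult (\<mu> la) (embc emb (\<psi> la))"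
      by (simp add: opc_def B_def)
    then have "ell (opc A (\<psi> la) + opc (B la) (\<psi> la)) = ell (cmult (\<mu> la) (embc emb (\<psi> la)))" by simp
    then have e1: "\<mu> la * ell (embc emb (\<psi> la)) = ell (opc A (\<psi> la)) + ell (opc (B la) (\<psi> la))"
      by (simp add: linear_add[OF ellL] ellcm)
    have "(\<mu> la - \<i>) * ell (embc emb (\<psi> la)) = \<mu> la * ell (embc emb (\<psi> la)) - \<i> * ell (embc emb (\<psi> la))"
      by (simp add: algebra_simps)
    also have "\<dots> = ell (opc (B la) (\<psi> la))" unfolding e1 Eeq0 by simp
    finally show ?thesis .
  qed
  have t\<psi>: "(\<psi> \<longlongrightarrow> \<psi> 0) (at 0)" using c\<psi> by (simp add: continuous_at)
  have L1: "((\<lambda>y. (\<mu> y - \<i>) / complex_of_real y) \<longlongrightarrow> dmu) (at 0)"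
  proof -
    have "(\<mu> has_derivative (\<lambda>x. x *\<^sub>R dmu)) (at 0)" using dmu by (simp add: has_vector_derivative_def)
    then have H: "((\<lambda>y. ((\<mu> y - \<mu> 0) - (y - 0) *\<^sub>R dmu) /\<^sub>R norm (y - 0)) \<longlongrightarrow> 0) (at 0)"
      by (simp add: has_derivative_at_within)
    have Hn: "((\<lambda>y. norm (((\<mu> y - \<mu> 0) - (y - 0) *\<^sub>R dmu) /\<^sub>R norm (y - 0))) \<longlongrightarrow> 0) (at 0)"
      using tendsto_norm_zero[OF H] .
    have ev: "eventually (\<lambda>y. norm (((\<mu> y - \<mu> 0) - (y - 0) *\<^sub>R dmu) /\<^sub>R norm (y - 0))
                 = norm ((\<mu> y - \<i>) / complex_of_real y - dmu)) (at (0::real))"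
    proof (rule eventually_at_filter[THEN iffD2], rule always_eventually, intro allI impI)
      fix y :: real assume y: "y \<noteq> 0"
      have "(\<mu> y - \<i>) / complex_of_real y - dmu = (\<mu> y - \<i> - complex_of_real y * dmu) / complex_of_real y"
        using y by (simp add: field_simps)
      then have "norm ((\<mu> y - \<i>) / complex_of_real y - dmu) = norm (\<mu> y - \<i> - complex_of_real y * dmu) / \<bar>y\<bar>"
        by (simp add: norm_divide)
      moreover have "norm (((\<mu> y - \<mu> 0) - (y - 0) *\<^sub>R dmu) /\<^sub>R norm (y - 0)) = norm (\<mu> y - \<i> - complex_of_real y * dmu) / \<bar>y\<bar>"
      proof -
        have X: "((\<mu> y - \<mu> 0) - (y - 0) *\<^sub>R dmu) = \<mu> y - \<i> - complex_of_real y * dmu"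
          by (simp add: \<mu>0 scaleR_conv_of_real)
        have "norm (((\<mu> y - \<mu> 0) - (y - 0) *\<^sub>R dmu) /\<^sub>R norm (y - 0)) = norm ((\<mu> y - \<mu> 0) - (y - 0) *\<^sub>R dmu) / \<bar>y\<bar>"
          by (simp add: divide_inverse mult.commute)
        then show ?thesis by (simp only: X)
      qed
      ultimately show "norm (((\<mu> y - \<mu> 0) - (y - 0) *\<^sub>R dmu) /\<^sub>R norm (y - 0))
                 = norm ((\<mu> y - \<i>) / complex_of_real y - dmu)" by simp
    qed
    have "((\<lambda>y. norm ((\<mu> y - \<i>) / complex_of_real y - dmu)) \<longlongrightarrow> 0) (at 0)"
      by (rule Lim_transform_eventually[OF Hn ev])
    then have "((\<lambda>y. (\<mu> y - \<i>) / complex_of_real y - dmu) \<longlongrightarrow> 0) (at 0)"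
      by (rule tendsto_norm_zero_cancel)
    then show ?thesis by (rule LIM_zero_cancel)
  qed
  have topA: "((\<lambda>la. opc A (\<psi> la)) \<longlongrightarrow> opc A (\<psi> 0)) (at 0)"
    unfolding opc_def
    by (intro tendsto_Pair bounded_linear.tendsto[OF bA] tendsto_fst tendsto_snd t\<psi>)
  have L2: "((\<lambda>la. ell (embc emb (\<psi> la))) \<longlongrightarrow> ell (embc emb (\<psi> 0))) (at 0)"
    unfolding Eeq by (intro tendsto_mult tendsto_const bounded_linear.tendsto[OF bl] topA)
  define G where "G la = (1/la) *\<^sub>R (D1 (la, 0) - D1 (0, 0)) - F0" for la
  have L3: "(G \<longlongrightarrow> 0) (at 0)"
  proof -
    have H: "((\<lambda>y. ((D1 y - D1 (0,0)) - blinfun_apply (D2 (0,0)) (y - (0,0))) /\<^sub>R norm (y - (0,0))) \<longlongrightarrow> 0) (at (0,0))"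
      using hD2 by (simp add: has_derivative_at_within)
    have g: "filterlim (\<lambda>la::real. (la, 0::'u)) (at (0,0)) (at 0)"
    proof (rule filterlim_atI)
      show "((\<lambda>la::real. (la, 0::'u)) \<longlongrightarrow> (0, 0)) (at 0)"
        by (intro tendsto_Pair tendsto_ident_at tendsto_const)
      show "\<forall>\<^sub>F la in at 0. (la, 0::'u) \<noteq> (0, 0)"
        by (simp add: eventually_at_filter)
    qed
    have Hc: "((\<lambda>la. ((D1 (la,0) - D1 (0,0)) - blinfun_apply (D2 (0,0)) ((la,0) - (0,0))) /\<^sub>R norm ((la,0::'u) - (0,0))) \<longlongrightarrow> 0) (at 0)"
      using filterlim_compose[OF H g] by simp
    have ev: "eventually (\<lambda>la. norm (((D1 (la,0) - D1 (0,0)) - blinfun_apply (D2 (0,0)) ((la,0) - (0,0))) /\<^sub>R norm ((la,0::'u) - (0,0)))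
               = norm (G la)) (at (0::real))"
    proof (rule eventually_at_filter[THEN iffD2], rule always_eventually, intro allI impI)
      fix la :: real assume la: "la \<noteq> 0"
      have "blinfun_apply (D2 (0,0)) ((la,0::'u) - (0,0)) = la *\<^sub>R F0"
      proof -
        have e: "((la,0::'u) - (0,0)) = la *\<^sub>R (1, 0)" by simp
        have "blinfun_apply (D2 (0,0)) (la *\<^sub>R (1, 0::'u)) = la *\<^sub>R F0"
          unfolding F0_def by (rule blinfun.scaleR_right)
        then show ?thesis by (simp only: e)
      qed
      moreover have "G la = (1/la) *\<^sub>R ((D1 (la,0) - D1 (0,0)) - la *\<^sub>R F0)"
        using la by (simp add: G_def scaleR_diff_right)
      moreover have "norm ((la,0::'u) - (0,0)) = \<bar>la\<bar>" by simp
      ultimately show "norm (((D1 (la,0) - D1 (0,0)) - blinfun_apply (D2 (0,0)) ((la,0) - (0,0))) /\<^sub>R norm ((la,0::'u) - (0,0)))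
               = norm (G la)" by (simp add: divide_inverse mult.commute)
    qed
    have "((\<lambda>la. norm (G la)) \<longlongrightarrow> 0) (at 0)"
      by (rule Lim_transform_eventually[OF tendsto_norm_zero[OF Hc] ev])
    then show ?thesis by (rule tendsto_norm_zero_cancel)
  qed
  define Q where "Q la = (1/la) *\<^sub>R opc (B la) (\<psi> la)" for la
  have Qeq: "Q la = opc (\<lambda>v. blinfun_apply (G la) (0, v)) (\<psi> la) + opc f0 (\<psi> la)" if la: "la \<noteq> 0" for la
  proof -
    have "blinfun_apply (G la) (0, v) + f0 v = (1/la) *\<^sub>R B la v" for v
      using K24a by (simp add: G_def f0_def B_def blinfun.diff_left blinfun.scaleR_left)
    then show ?thesis by (simp add: Q_def opc_def)
  qed
  have tG1: "((\<lambda>la. blinfun_apply (G la) (0, fst (\<psi> la))) \<longlongrightarrow> blinfun_apply 0 (0, fst (\<psi> 0))) (at 0)"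
  proof -
    have P: "((\<lambda>la. (0::real, fst (\<psi> la))) \<longlongrightarrow> (0, fst (\<psi> 0))) (at 0)"
      by (intro tendsto_Pair tendsto_const tendsto_fst t\<psi>)
    show ?thesis using blinfun.tendsto[OF L3 P] by simp
  qed
  have tG2: "((\<lambda>la. blinfun_apply (G la) (0, snd (\<psi> la))) \<longlongrightarrow> blinfun_apply 0 (0, snd (\<psi> 0))) (at 0)"
  proof -
    have P: "((\<lambda>la. (0::real, snd (\<psi> la))) \<longlongrightarrow> (0, snd (\<psi> 0))) (at 0)"
      by (intro tendsto_Pair tendsto_const tendsto_snd t\<psi>)
    show ?thesis using blinfun.tendsto[OF L3 P] by simp
  qed
  have tf0: "((\<lambda>la. opc f0 (\<psi> la)) \<longlongrightarrow> opc f0 (\<psi> 0)) (at 0)"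
    unfolding opc_def
    by (intro tendsto_Pair bounded_linear.tendsto[OF bf0] tendsto_fst tendsto_snd t\<psi>)
  have T00: "((\<lambda>la. opc (\<lambda>v. blinfun_apply (G la) (0, v)) (\<psi> la) + opc f0 (\<psi> la)) \<longlongrightarrow> (0, 0) + opc f0 (\<psi> 0)) (at 0)"
    using tG1 tG2 unfolding opc_def by (intro tendsto_add tendsto_Pair tf0[unfolded opc_def]) simp_all
  have "((\<lambda>la. opc (\<lambda>v. blinfun_apply (G la) (0, v)) (\<psi> la) + opc f0 (\<psi> la)) \<longlongrightarrow> opc f0 (\<psi> 0)) (at 0)"
  proof -
    have z: "(0::'v, 0::'v) + opc f0 (\<psi> 0) = opc f0 (\<psi> 0)" by (simp add: opc_def)
    show ?thesis using T00 unfolding z .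
  qed
  moreover have "eventually (\<lambda>la. opc (\<lambda>v. blinfun_apply (G la) (0, v)) (\<psi> la) + opc f0 (\<psi> la) = Q la) (at (0::real))"
    by (rule eventually_at_filter[THEN iffD2], rule always_eventually) (simp add: Qeq)
  ultimately have L4: "(Q \<longlongrightarrow> opc f0 (\<psi> 0)) (at 0)" by (rule Lim_transform_eventually)
  have L5: "((\<lambda>la. ell (Q la)) \<longlongrightarrow> ell (opc f0 (\<psi> 0))) (at 0)"
    by (rule bounded_linear.tendsto[OF bl L4])
  have L6: "((\<lambda>la. (\<mu> la - \<i>) / complex_of_real la * ell (embc emb (\<psi> la))) \<longlongrightarrow> dmu * ell (embc emb (\<psi> 0))) (at 0)"
    by (rule tendsto_mult[OF L1 L2])
  have ev6: "eventually (\<lambda>la. (\<mu> la - \<i>) / complex_of_real la * ell (embc emb (\<psi> la)) = ell (Q la)) (at (0::real))"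
    unfolding eventually_at
  proof (intro exI[of _ \<epsilon>] conjI ballI impI ep)
    fix la :: real assume "la \<in> UNIV" and la: "la \<noteq> 0 \<and> dist la 0 < \<epsilon>"
    then have lab: "la \<in> ball 0 \<epsilon>" by (simp add: dist_commute)
    have "(\<mu> la - \<i>) / complex_of_real la * ell (embc emb (\<psi> la))
          = complex_of_real (1/la) * ((\<mu> la - \<i>) * ell (embc emb (\<psi> la)))"
      by (simp add: divide_inverse mult.commute mult.left_commute of_real_inverse)
    also have "\<dots> = complex_of_real (1/la) * ell (opc (B la) (\<psi> la))" by (simp only: eqla[OF lab])
    also have "\<dots> = ell (Q la)" by (simp add: Q_def linear_scale[OF ellL] scaleR_conv_of_real)
    finally show "(\<mu> la - \<i>) / complex_of_real la * ell (embc emb (\<psi> la)) = ell (Q la)" .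
  qed
  have L7: "((\<lambda>la. (\<mu> la - \<i>) / complex_of_real la * ell (embc emb (\<psi> la))) \<longlongrightarrow> ell (opc f0 (\<psi> 0))) (at 0)"
  proof -
    have ev6': "eventually (\<lambda>la. ell (Q la) = (\<mu> la - \<i>) / complex_of_real la * ell (embc emb (\<psi> la))) (at (0::real))"
      using ev6 by (rule eventually_mono) simp
    show ?thesis by (rule Lim_transform_eventually[OF L5 ev6'])
  qed
  have lim: "dmu * ell (embc emb (\<psi> 0)) = ell (opc f0 (\<psi> 0))"
    by (rule tendsto_unique[OF at_neq_bot L6 L7])
  have b0: "0 \<in> ball (0::real) \<epsilon>" using ep by simp
  have "opc (\<lambda>v. A v + blinfun_apply (D1 (0, 0)) (0, v)) (\<psi> 0) = cmult \<i> (embc emb (\<psi> 0))"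
    using eig[OF b0] \<mu>0 by simp
  then have "opc A (\<psi> 0) = cmult \<i> (embc emb (\<psi> 0))" using K24a by (simp add: opc_def)
  then have "ikA A emb 1 (\<psi> 0) = 0" by (simp add: Tform)
  then obtain z0 where z0: "\<psi> 0 = cmult z0 \<psi>s" using kerS by blast
  have "z0 \<noteq> 0" using eig[OF b0] z0 by auto
  have "dmu * (z0 * ell (embc emb \<psi>s)) = z0 * ell (opc f0 \<psi>s)"
    using lim unfolding z0 embc_eq_opc opc_cmult[OF le] opc_cmult[OF lf0] ellcm .
  then have "z0 * (dmu * ell (embc emb \<psi>s)) = z0 * ell (opc f0 \<psi>s)" by (simp add: algebra_simps)
  then have "dmu * ell (embc emb \<psi>s) = ell (opc f0 \<psi>s)" using \<open>z0 \<noteq> 0\<close> by simp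
  then show ?thesis using Rdmu unfolding f0_def F0_def by blast
qed


lemma ftc_real:
  fixes F f :: "real \<Rightarrow> real"
  assumes "a \<le> b" and d: "\<And>t. (F has_real_derivative f t) (at t)"
  shows "(f has_integral (F b - F a)) {a..b}"
proof (rule fundamental_theorem_of_calculus[OF assms(1)])
  fix x assume "x \<in> {a..b}"
  have "(F has_real_derivative f x) (at x within {a..b})" by (rule has_field_derivative_at_within[OF d])
  then show "(F has_vector_derivative f x) (at x within {a..b})"
    by (simp add: has_real_derivative_iff_has_vector_derivative)
qed

lemma int_cos: "((\<lambda>t. cos t) has_integral 0) {0..2*pi}"
proof -
  have "((\<lambda>t. cos t) has_integral (sin (2*pi) - sin 0)) {0..2*pi}"
    by (rule ftc_real) (auto intro!: derivative_eq_intros)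
  then show ?thesis by simp
qed

lemma int_cos2: "((\<lambda>t. cos t * cos t) has_integral pi) {0..2*pi}"
proof -
  have "((\<lambda>t. cos t * cos t) has_integral ((\<lambda>t. t/2 + sin t * cos t / 2) (2*pi) - (\<lambda>t. t/2 + sin t * cos t / 2) 0)) {0..2*pi}"
  proof (rule ftc_real)
    fix t :: real
    have "((\<lambda>t. t/2 + sin t * cos t / 2) has_real_derivative (1/2 + (cos t * cos t - sin t * sin t) / 2)) (at t)"
      by (auto intro!: derivative_eq_intros simp: field_simps)
    moreover have "1/2 + (cos t * cos t - sin t * sin t) / 2 = cos t * cos t"
      using sin_cos_squared_add[of t] by (simp add: power2_eq_square field_simps)
    ultimately show "((\<lambda>t. t/2 + sin t * cos t / 2) has_real_derivative cos t * cos t) (at t)" by simp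
  qed simp
  then show ?thesis by simp
qed

lemma int_sincos: "((\<lambda>t. sin t * cos t) has_integral 0) {0..2*pi}"
proof -
  have "((\<lambda>t. sin t * cos t) has_integral ((\<lambda>t. sin t * sin t / 2) (2*pi) - (\<lambda>t. sin t * sin t / 2) 0)) {0..2*pi}"
  proof (rule ftc_real)
    fix t :: real
    show "((\<lambda>t. sin t * sin t / 2) has_real_derivative sin t * cos t) (at t)"
      by (auto intro!: derivative_eq_intros simp: algebra_simps)
  qed simp
  then show ?thesis by simp
qed

lemma int_sin: "((\<lambda>t. sin t) has_integral 0) {0..2*pi}"
proof -
  have "((\<lambda>t. sin t) has_integral (- cos (2*pi) - (- cos 0))) {0..2*pi}"
    by (rule ftc_real) (auto intro!: derivative_eq_intros)
  then show ?thesis by simp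
qed

lemma int_sin2: "((\<lambda>t. sin t * sin t) has_integral pi) {0..2*pi}"
proof -
  have "((\<lambda>t. sin t * sin t) has_integral ((\<lambda>t. t/2 - sin t * cos t / 2) (2*pi) - (\<lambda>t. t/2 - sin t * cos t / 2) 0)) {0..2*pi}"
  proof (rule ftc_real)
    fix t :: real
    have "((\<lambda>t. t/2 - sin t * cos t / 2) has_real_derivative (1/2 - (cos t * cos t - sin t * sin t) / 2)) (at t)"
      by (auto intro!: derivative_eq_intros simp: field_simps)
    moreover have "1/2 - (cos t * cos t - sin t * sin t) / 2 = sin t * sin t"
      using sin_cos_squared_add[of t] by (simp add: power2_eq_square field_simps)
    ultimately show "((\<lambda>t. t/2 - sin t * cos t / 2) has_real_derivative sin t * sin t) (at t)" by simp
  qed simp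
  then show ?thesis by simp
qed

lemma l1_trig:
  fixes d a b c :: "'u::real_inner"
  shows "(1/pi) * integral {0..2*pi} (\<lambda>t. inner d (a + cos t *\<^sub>R b + sin t *\<^sub>R c) * cos t) = inner d b"
proof -
  have e: "inner d (a + cos t *\<^sub>R b + sin t *\<^sub>R c) * cos t
      = inner d a * cos t + inner d b * (cos t * cos t) + inner d c * (sin t * cos t)" for t
    by (simp add: inner_add_right algebra_simps)
  have "((\<lambda>t. inner d a * cos t + inner d b * (cos t * cos t) + inner d c * (sin t * cos t)) has_integral
          (inner d a * 0 + inner d b * pi + inner d c * 0)) {0..2*pi}"
    by (intro has_integral_add has_integral_mult_right int_cos int_cos2 int_sincos)
  then have "integral {0..2*pi} (\<lambda>t. inner d (a + cos t *\<^sub>R b + sin t *\<^sub>R c) * cos t) = inner d b * pi"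
    unfolding e by (simp add: integral_unique)
  then show ?thesis by simp
qed

lemma l2_trig:
  fixes d a b c :: "'u::real_inner"
  shows "(1/pi) * integral {0..2*pi} (\<lambda>t. inner d (a + cos t *\<^sub>R b + sin t *\<^sub>R c) * sin t) = inner d c"
proof -
  have e: "inner d (a + cos t *\<^sub>R b + sin t *\<^sub>R c) * sin t
      = inner d a * sin t + inner d b * (sin t * cos t) + inner d c * (sin t * sin t)" for t
    by (simp add: inner_add_right algebra_simps)
  have "((\<lambda>t. inner d a * sin t + inner d b * (sin t * cos t) + inner d c * (sin t * sin t)) has_integral
          (inner d a * 0 + inner d b * 0 + inner d c * pi)) {0..2*pi}"
    by (intro has_integral_add has_integral_mult_right int_sin int_sin2 int_sincos)
  then have "integral {0..2*pi} (\<lambda>t. inner d (a + cos t *\<^sub>R b + sin t *\<^sub>R c) * sin t) = inner d c * pi"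
    unfolding e by (simp add: integral_unique)
  then show ?thesis by simp
qed

lemma trig_inj:
  fixes a b c a' b' c' :: "'a::real_vector"
  assumes "(\<lambda>t::real. a + cos t *\<^sub>R b + sin t *\<^sub>R c) = (\<lambda>t. a' + cos t *\<^sub>R b' + sin t *\<^sub>R c')"
  shows "a = a' \<and> b = b' \<and> c = c'"
proof -
  have h: "a + cos t *\<^sub>R b + sin t *\<^sub>R c = a' + cos t *\<^sub>R b' + sin t *\<^sub>R c'" for t
    using assms by meson
  have h0: "a + b = a' + b'" using h[of 0] by simp
  have h1: "a - b = a' - b'" using h[of pi] by simp
  have h2: "a + c = a' + c'" using h[of "pi/2"] by simp
  have "(a + b) + (a - b) = (a' + b') + (a' - b')" using h0 h1 by simp
  then have "2 *\<^sub>R a = 2 *\<^sub>R a'" by (simp add: scaleR_2 algebra_simps)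
  then have aa: "a = a'" by simp
  then show ?thesis using h0 h2 by simp
qed

lemma trig_deriv:
  fixes emb :: "'u::real_normed_vector \<Rightarrow> 'v::real_normed_vector"
  assumes le: "linear emb"
  shows "vector_derivative (emb \<circ> (\<lambda>t. a + cos t *\<^sub>R b + sin t *\<^sub>R c)) (at t)
           = - sin t *\<^sub>R emb b + cos t *\<^sub>R emb c"
proof -
  have e: "emb \<circ> (\<lambda>t. a + cos t *\<^sub>R b + sin t *\<^sub>R c) = (\<lambda>t. emb a + cos t *\<^sub>R emb b + sin t *\<^sub>R emb c)"
    by (simp add: fun_eq_iff linear_add[OF le] linear_scale[OF le])
  have "((\<lambda>t. emb a + cos t *\<^sub>R emb b + sin t *\<^sub>R emb c) has_vector_derivative
           (0 + (cos t *\<^sub>R 0 + (- sin t) *\<^sub>R emb b) + (sin t *\<^sub>R 0 + cos t *\<^sub>R emb c))) (at t)"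
    by (intro has_vector_derivative_add has_vector_derivative_const has_vector_derivative_scaleR
        DERIV_cos DERIV_sin)
  then have "((\<lambda>t. emb a + cos t *\<^sub>R emb b + sin t *\<^sub>R emb c) has_vector_derivative
           (- sin t *\<^sub>R emb b + cos t *\<^sub>R emb c)) (at t)" by simp
  then show ?thesis unfolding e by (rule vector_derivative_at)
qed


theorem lemma4p1:
  fixes A :: "'u::{real_inner,complete_space} \<Rightarrow> 'v::{real_inner,complete_space}"
    and emb :: "'u \<Rightarrow> 'v"
    and K :: "real set"
    and h :: "real \<Rightarrow> 'u \<Rightarrow> 'v"
    and D1 :: "real \<times> 'u \<Rightarrow> (real \<times> 'u) \<Rightarrow>\<^sub>L 'v"
    and D2 :: "real \<times> 'u \<Rightarrow> (real \<times> 'u) \<Rightarrow>\<^sub>L ((real \<times> 'u) \<Rightarrow>\<^sub>L 'v)"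
    and \<psi>s :: "'u \<times> 'u"
    and d :: 'u
  assumes emb_lin: "linear emb" and emb_inj: "inj emb"
    and A_lin: "linear A"
    and U_norm: "\<And>u. norm (A u) = norm u"
    and A_closed: "closed (range (\<lambda>u. (emb u, A u)))"
    and zero_res: "bij A"
    \<comment> \<open>(K1)\<close>
    and K1: "\<exists>M. \<forall>n::nat. n \<ge> 2 \<longrightarrow> bij (ikA A emb (real n)) \<and>
              (\<forall>p. norm (embc emb p) \<le> M / real n * norm (ikA A emb (real n) p))"
    \<comment> \<open>(K2-1): K open interval containing 0; h : K x U \<rightarrow> V by typing\<close>
    and K_int: "\<exists>a b. K = {a<..<b}" and K0: "0 \<in> K"
    \<comment> \<open>(K2-2)\<close>
    and K22: "\<forall>la\<in>K. \<forall>u\<in>Xsp emb. L2sp (\<lambda>t. h la (u t))"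
    \<comment> \<open>(K2-3): C^2 from K x X to Y ...\<close>
    and K23: "C2_XY emb (K \<times> Xsp emb) (\<lambda>p t. h (fst p) (snd p t))"
    \<comment> \<open>... and hence C^2 from K x U to V, with derivatives D1, D2\<close>
    and hD1: "\<forall>x\<in>K \<times> UNIV. ((\<lambda>p. h (fst p) (snd p)) has_derivative blinfun_apply (D1 x)) (at x)"
    and hD2: "\<forall>x\<in>K \<times> UNIV. (D1 has_derivative blinfun_apply (D2 x)) (at x)"
    and hD2_cont: "continuous_on (K \<times> UNIV) D2"
    \<comment> \<open>(K2-4)\<close>
    and K24a: "\<forall>v. blinfun_apply (D1 (0, 0)) (0, v) = 0"
    and K24b: "\<forall>la\<in>K. h la 0 = 0"
    \<comment> \<open>(B1)\<close>
    and B1a: "cdim_one {p. ikA A emb 1 p = 0}"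
    and B1b: "ccodim_one (range (ikA A emb 1))"
    and B1c: "\<forall>p. ikA A emb 1 p = 0 \<and> p \<noteq> 0 \<longrightarrow> embc emb p \<notin> range (ikA A emb 1)"
    \<comment> \<open>(B2): the eigenvalue branch \<mu> of A_c + h_u(\<lambda>,0) with \<mu>(0) = i has Re \<mu>'(0) \<noteq> 0\<close>
    and B2: "\<exists>\<epsilon>>0. \<exists>\<mu>::real \<Rightarrow> complex. \<exists>\<psi>::real \<Rightarrow> 'u \<times> 'u.
              ball 0 \<epsilon> \<subseteq> K \<and>
              (\<forall>la\<in>ball 0 \<epsilon>. \<psi> la \<noteq> 0 \<and>
                 opc (\<lambda>v. A v + blinfun_apply (D1 (la, 0)) (0, v)) (\<psi> la) = cmult (\<mu> la) (embc emb (\<psi> la))) \<and>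
              continuous (at 0) \<psi> \<and> \<mu> 0 = \<i> \<and> (\<exists>dmu. (\<mu> has_vector_derivative dmu) (at 0) \<and> Re dmu \<noteq> 0)"
    \<comment> \<open>(B3)\<close>
    and B3: "\<forall>k::int. k \<noteq> 1 \<and> k \<noteq> -1 \<longrightarrow> bij (ikA A emb (real_of_int k))"
    \<comment> \<open>\<psi>_* \<in> N(i - A_c) \ {0} and (d, \<psi>_* )_{U_c} = 1\<close>
    and psi_ker: "ikA A emb 1 \<psi>s = 0" and psi_nz: "\<psi>s \<noteq> 0"
    and d_norm: "inner d (fst \<psi>s) = 1 \<and> inner d (snd \<psi>s) = 0"
  shows "let l1 = (\<lambda>u::real \<Rightarrow> 'u. (1/pi) * integral {0..2*pi} (\<lambda>t. inner d (u t) * cos t));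
             l2 = (\<lambda>u::real \<Rightarrow> 'u. (1/pi) * integral {0..2*pi} (\<lambda>t. inner d (u t) * sin t));
             ustar = (\<lambda>t. cos t *\<^sub>R fst \<psi>s - sin t *\<^sub>R snd \<psi>s);
             f0 = (\<lambda>v. blinfun_apply (blinfun_apply (D2 (0, 0)) (1, 0)) (0, v));
             X01 = {(\<lambda>t. a + cos t *\<^sub>R b + sin t *\<^sub>R c) | a b c. True};
             Y01 = {(\<lambda>t. a + cos t *\<^sub>R b + sin t *\<^sub>R c) | a b c. True};
             S = (\<lambda>(la, \<sigma>, u). ((l1 u, l2 u),
                    (\<lambda>t. vector_derivative (emb \<circ> u) (at t) - A (u t)
                         - \<sigma> *\<^sub>R A (ustar t) - la *\<^sub>R f0 (ustar t))))
         in bij_betw S (UNIV \<times> UNIV \<times> X01) (UNIV \<times> Y01)"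
  proof -
  obtain \<psi>1 \<psi>2 where ps: "\<psi>s = (\<psi>1, \<psi>2)" by (cases \<psi>s)
  have injA: "inj A" using zero_res by (rule bij_is_inj)
  have surjA: "surj A" using zero_res by (rule bij_is_surj)
  have lT: "linear (ikA A emb 1)" by (rule T_linear[OF emb_lin A_lin])
  have cT: "\<And>z p. ikA A emb 1 (cmult z p) = cmult z (ikA A emb 1 p)" by (rule T_cmult[OF emb_lin A_lin])
  have clT: "closed (range (\<lambda>p. (p, ikA A emb 1 p)))" by (rule T_closed[OF A_lin U_norm A_closed injA])
  obtain ell :: "'v \<times> 'v \<Rightarrow> complex" where bl: "bounded_linear ell"
    and ellcm: "\<forall>z v. ell (cmult z v) = z * ell v" and ellR: "\<forall>v. ell v = 0 \<longleftrightarrow> v \<in> range (ikA A emb 1)"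
    using ell_exists[OF lT cT clT B1b] by blast
  have ellT: "\<And>p. ell (ikA A emb 1 p) = 0" using ellR by blast
  have ellL: "linear ell" using bl by (rule bounded_linear.linear)
  obtain \<psi>g where \<psi>g: "\<psi>g \<noteq> 0" "{p. ikA A emb 1 p = 0} = range (\<lambda>z. cmult z \<psi>g)"
    using B1a unfolding cdim_one_def by blast
  have "\<psi>s \<in> {p. ikA A emb 1 p = 0}" using psi_ker by simp
  then have "\<psi>s \<in> range (\<lambda>z. cmult z \<psi>g)" unfolding \<psi>g(2) .
  then obtain w where w: "\<psi>s = cmult w \<psi>g" by (rule rangeE)
  have w0: "w \<noteq> 0" using psi_nz w by auto
  have kerS: "\<exists>z. q = cmult z \<psi>s" if q: "ikA A emb 1 q = 0" for q
  proof -
    have "q \<in> {p. ikA A emb 1 p = 0}" using q by simp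
    then have "q \<in> range (\<lambda>z. cmult z \<psi>g)" unfolding \<psi>g(2) .
    then obtain z' where z': "q = cmult z' \<psi>g" by (rule rangeE)
    have "q = cmult (z' / w) \<psi>s" using w0 by (simp add: z' w cmult_mult)
    then show ?thesis by blast
  qed
  have hD2': "(D1 has_derivative blinfun_apply (D2 (0,0))) (at (0,0))"
    using hD2 K0 by simp
  have "\<exists>dmu. Re dmu \<noteq> 0 \<and> dmu * ell (embc emb \<psi>s) =
            ell (opc (\<lambda>v. blinfun_apply (blinfun_apply (D2 (0, 0)) (1, 0)) (0, v)) \<psi>s)"
    apply (rule key_B2[where K=K])
    apply (rule emb_lin)
    apply (rule A_lin)
    apply (rule U_norm)
    apply (rule bl)
    apply (rule ellcm[rule_format])
    apply (rule ellT)
    apply (rule hD2')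
    apply (rule K24a)
    apply (rule B2)
    apply (rule kerS)
    apply assumption
    done
  then obtain dmu where Rd: "Re dmu \<noteq> 0" and dm: "dmu * ell (embc emb \<psi>s) =
            ell (opc (\<lambda>v. blinfun_apply (blinfun_apply (D2 (0, 0)) (1, 0)) (0, v)) \<psi>s)"
    by blast
  define f0 where "f0 = (\<lambda>v. blinfun_apply (blinfun_apply (D2 (0, 0)) (1, 0)) (0, v))"
  have bf0: "bounded_linear f0" unfolding f0_def
    by (intro bounded_linear_compose[OF blinfun.bounded_linear_right] bounded_linear_Pair
        bounded_linear_zero bounded_linear_ident)
  have lf0: "linear f0" using bf0 by (rule bounded_linear.linear)
  define \<alpha> where "\<alpha> = ell (embc emb \<psi>s)"
  define \<beta> where "\<beta> = ell (opc f0 \<psi>s)"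
  have dmb: "\<beta> = dmu * \<alpha>" using dm by (simp add: \<alpha>_def \<beta>_def f0_def)
  have "embc emb \<psi>s \<notin> range (ikA A emb 1)" using B1c psi_ker psi_nz by blast
  then have \<alpha>0: "\<alpha> \<noteq> 0" unfolding \<alpha>_def using ellR[rule_format, of "embc emb \<psi>s"] by blast
  have pk: "- emb \<psi>2 - A \<psi>1 = 0 \<and> emb \<psi>1 - A \<psi>2 = 0"
    using psi_ker by (simp add: ps ikA1_eq zero_prod_def)
  have A\<psi>1: "A \<psi>1 = - emb \<psi>2"
  proof -
    have "- emb \<psi>2 - A \<psi>1 = 0" using pk by blast
    then show ?thesis by (simp add: diff_eq_eq)
  qed
  have A\<psi>2: "A \<psi>2 = emb \<psi>1"
  proof -
    have "emb \<psi>1 - A \<psi>2 = 0" using pk by blast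
    then show ?thesis by simp
  qed
  have d1: "inner d \<psi>1 = 1" and d2: "inner d \<psi>2 = 0" using d_norm by (simp_all add: ps)
  define Y1 where "Y1 la \<sigma> b c = emb c - A b - \<sigma> *\<^sub>R A \<psi>1 - la *\<^sub>R f0 \<psi>1" for la \<sigma> :: real and b c :: 'u
  define Y2 where "Y2 la \<sigma> b c = - emb b - A c + \<sigma> *\<^sub>R A \<psi>2 + la *\<^sub>R f0 \<psi>2" for la \<sigma> :: real and b c :: 'u
  have E: "ikA A emb 1 (c, b) = (Y2 la \<sigma> b c, Y1 la \<sigma> b c) - \<sigma> *\<^sub>R embc emb \<psi>s + la *\<^sub>R cmult \<i> (opc f0 \<psi>s)"
    for la \<sigma> b c
    by (simp add: ikA1_eq ps embc_def opc_def cmult_ii Y1_def Y2_def A\<psi>1 A\<psi>2 algebra_simps)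
  have ellE: "ell (Y2 la \<sigma> b c, Y1 la \<sigma> b c) = \<alpha> * (complex_of_real \<sigma> - \<i> * complex_of_real la * dmu)"
    for la \<sigma> b c
  proof -
    have "(Y2 la \<sigma> b c, Y1 la \<sigma> b c) = ikA A emb 1 (c, b) + \<sigma> *\<^sub>R embc emb \<psi>s - la *\<^sub>R cmult \<i> (opc f0 \<psi>s)"
      unfolding E[where la=la and \<sigma>=\<sigma> and b=b and c=c] by (simp add: algebra_simps)
    then have "ell (Y2 la \<sigma> b c, Y1 la \<sigma> b c) = ell (ikA A emb 1 (c, b)) + complex_of_real \<sigma> * \<alpha> - complex_of_real la * (\<i> * \<beta>)"
      by (simp add: linear_add[OF ellL] linear_diff[OF ellL] linear_scale[OF ellL] ellcm scaleR_conv_of_real \<alpha>_def \<beta>_def)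
    then show ?thesis by (simp add: ellT dmb algebra_simps)
  qed
  have lsu: "la = la' \<and> \<sigma> = \<sigma>'"
    if eq: "complex_of_real \<sigma> - \<i> * complex_of_real la * dmu = complex_of_real \<sigma>' - \<i> * complex_of_real la' * dmu"
    for la \<sigma> la' \<sigma>' :: real
  proof -
    have "Im (complex_of_real \<sigma> - \<i> * complex_of_real la * dmu) = Im (complex_of_real \<sigma>' - \<i> * complex_of_real la' * dmu)"
      using eq by simp
    then have "la * Re dmu = la' * Re dmu" by simp
    then have la: "la = la'" using Rd by simp
    have "Re (complex_of_real \<sigma> - \<i> * complex_of_real la * dmu) = Re (complex_of_real \<sigma>' - \<i> * complex_of_real la' * dmu)"
      using eq by simp
    then have "\<sigma> + la * Im dmu = \<sigma>' + la' * Im dmu" by simp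
    then show ?thesis using la by simp
  qed
  define uf :: "'u \<Rightarrow> 'u \<Rightarrow> 'u \<Rightarrow> real \<Rightarrow> 'u" where "uf a b c = (\<lambda>t. a + cos t *\<^sub>R b + sin t *\<^sub>R c)" for a b c
  define vf :: "'v \<Rightarrow> 'v \<Rightarrow> 'v \<Rightarrow> real \<Rightarrow> 'v" where "vf a b c = (\<lambda>t. a + cos t *\<^sub>R b + sin t *\<^sub>R c)" for a b c
  define l1 where "l1 = (\<lambda>u::real \<Rightarrow> 'u. (1/pi) * integral {0..2*pi} (\<lambda>t. inner d (u t) * cos t))"
  define l2 where "l2 = (\<lambda>u::real \<Rightarrow> 'u. (1/pi) * integral {0..2*pi} (\<lambda>t. inner d (u t) * sin t))"
  define ustar where "ustar = (\<lambda>t. cos t *\<^sub>R fst \<psi>s - sin t *\<^sub>R snd \<psi>s)"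
  define X01 :: "(real \<Rightarrow> 'u) set" where "X01 = {(\<lambda>t. a + cos t *\<^sub>R b + sin t *\<^sub>R c) | a b c. True}"
  define Y01 :: "(real \<Rightarrow> 'v) set" where "Y01 = {(\<lambda>t. a + cos t *\<^sub>R b + sin t *\<^sub>R c) | a b c. True}"
  define S where "S = (\<lambda>(la, \<sigma>, u). ((l1 u, l2 u),
                    (\<lambda>t. vector_derivative (emb \<circ> u) (at t) - A (u t)
                         - \<sigma> *\<^sub>R A (ustar t) - la *\<^sub>R f0 (ustar t))))"
  have X01_eq: "X01 = {uf a b c | a b c. True}" by (simp add: X01_def uf_def)
  have Y01_eq: "Y01 = {vf a b c | a b c. True}" by (simp add: Y01_def vf_def)
  have Sform: "S (la, \<sigma>, uf a b c) = ((inner d b, inner d c), vf (- A a) (Y1 la \<sigma> b c) (Y2 la \<sigma> b c))"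
    for la \<sigma> a b c
  proof -
    have e1: "l1 (uf a b c) = inner d b" unfolding l1_def uf_def by (rule l1_trig)
    have e2: "l2 (uf a b c) = inner d c" unfolding l2_def uf_def by (rule l2_trig)
    have e3: "vector_derivative (emb \<circ> uf a b c) (at t) = - sin t *\<^sub>R emb b + cos t *\<^sub>R emb c" for t
      unfolding uf_def by (rule trig_deriv[OF emb_lin])
    have e4: "A (uf a b c t) = A a + cos t *\<^sub>R A b + sin t *\<^sub>R A c" for t
      by (simp add: uf_def linear_add[OF A_lin] linear_scale[OF A_lin])
    have e5: "A (ustar t) = cos t *\<^sub>R A \<psi>1 - sin t *\<^sub>R A \<psi>2" for t
      by (simp add: ustar_def ps linear_diff[OF A_lin] linear_scale[OF A_lin])
    have e6: "f0 (ustar t) = cos t *\<^sub>R f0 \<psi>1 - sin t *\<^sub>R f0 \<psi>2" for t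
      by (simp add: ustar_def ps linear_diff[OF lf0] linear_scale[OF lf0])
    have e7: "vector_derivative (emb \<circ> uf a b c) (at t) - A (uf a b c t) - \<sigma> *\<^sub>R A (ustar t) - la *\<^sub>R f0 (ustar t)
        = vf (- A a) (Y1 la \<sigma> b c) (Y2 la \<sigma> b c) t" for t
      unfolding e3 e4 e5 e6 by (simp add: vf_def Y1_def Y2_def algebra_simps)
    show ?thesis unfolding S_def using e1 e2 e7 by (simp add: fun_eq_iff)
  qed
  have main: "bij_betw S (UNIV \<times> UNIV \<times> X01) (UNIV \<times> Y01)"
    unfolding bij_betw_def
  proof (intro conjI)
    show "inj_on S (UNIV \<times> UNIV \<times> X01)"
    proof (rule inj_onI)
      fix x y assume x: "x \<in> UNIV \<times> UNIV \<times> X01" and y: "y \<in> UNIV \<times> UNIV \<times> X01" and Sxy: "S x = S y"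
      obtain la \<sigma> a b c where xe: "x = (la, \<sigma>, uf a b c)" using x unfolding X01_eq by blast
      obtain la' \<sigma>' a' b' c' where ye: "y = (la', \<sigma>', uf a' b' c')" using y unfolding X01_eq by blast
      have eqs: "inner d b = inner d b'" "inner d c = inner d c'"
        and veq: "vf (- A a) (Y1 la \<sigma> b c) (Y2 la \<sigma> b c) = vf (- A a') (Y1 la' \<sigma>' b' c') (Y2 la' \<sigma>' b' c')"
        using Sxy unfolding xe ye Sform by simp_all
      have co: "- A a = - A a' \<and> Y1 la \<sigma> b c = Y1 la' \<sigma>' b' c' \<and> Y2 la \<sigma> b c = Y2 la' \<sigma>' b' c'"
        using veq unfolding vf_def by (rule trig_inj)
      then have aa: "a = a'" using injA by (simp add: inj_eq)
      have "\<alpha> * (complex_of_real \<sigma> - \<i> * complex_of_real la * dmu) = \<alpha> * (complex_of_real \<sigma>' - \<i> * complex_of_real la' * dmu)"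
      proof -
        have "ell (Y2 la \<sigma> b c, Y1 la \<sigma> b c) = ell (Y2 la' \<sigma>' b' c', Y1 la' \<sigma>' b' c')" using co by simp
        then show ?thesis by (simp only: ellE)
      qed
      then have "complex_of_real \<sigma> - \<i> * complex_of_real la * dmu = complex_of_real \<sigma>' - \<i> * complex_of_real la' * dmu"
        using \<alpha>0 by simp
      then have ls: "la = la' \<and> \<sigma> = \<sigma>'" by (rule lsu)
      have "ikA A emb 1 (c, b) = ikA A emb 1 (c', b')"
        unfolding E[where la=la and \<sigma>=\<sigma> and b=b and c=c] E[where la=la' and \<sigma>=\<sigma>' and b=b' and c=c']
        using co ls by simp
      then have "ikA A emb 1 ((c, b) - (c', b')) = 0"
        using linear_diff[OF lT, of "(c, b)" "(c', b')"] by simp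
      then obtain z where z: "(c, b) - (c', b') = cmult z \<psi>s" using kerS by blast
      then have zc: "c - c' = Re z *\<^sub>R \<psi>1 - Im z *\<^sub>R \<psi>2" and zb: "b - b' = Im z *\<^sub>R \<psi>1 + Re z *\<^sub>R \<psi>2"
        by (simp_all add: ps cmult_pair)
      have "inner d (c - c') = Re z" unfolding zc by (simp add: inner_diff_right d1 d2)
      then have Rz: "Re z = 0" using eqs by (simp add: inner_diff_right)
      have "inner d (b - b') = Im z" unfolding zb by (simp add: inner_add_right d1 d2)
      then have Iz: "Im z = 0" using eqs by (simp add: inner_diff_right)
      have "z = 0" using Rz Iz by (simp add: complex_eq_iff)
      then have "(c - c', b - b') = (0, 0)" using z by (simp add: zero_prod_def)
      then have "c = c' \<and> b = b'" by simp
      then show "x = y" unfolding xe ye using aa ls by simp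
    qed
    show "S ` (UNIV \<times> UNIV \<times> X01) = UNIV \<times> Y01"
    proof
      show "S ` (UNIV \<times> UNIV \<times> X01) \<subseteq> UNIV \<times> Y01"
      proof
        fix y assume "y \<in> S ` (UNIV \<times> UNIV \<times> X01)"
        then obtain la \<sigma> a b c where "y = S (la, \<sigma>, uf a b c)" unfolding X01_eq by blast
        then show "y \<in> UNIV \<times> Y01" unfolding Sform Y01_eq by blast
      qed
      show "UNIV \<times> Y01 \<subseteq> S ` (UNIV \<times> UNIV \<times> X01)"
      proof
        fix y :: "(real \<times> real) \<times> (real \<Rightarrow> 'v)" assume "y \<in> UNIV \<times> Y01"
        then obtain r1 r2 y0 y1 y2 where ye: "y = ((r1, r2), vf y0 y1 y2)" unfolding Y01_eq by force
        define a where "a = inv A (- y0)"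
        have Aa: "A a = - y0" unfolding a_def by (rule surj_f_inv_f[OF surjA])
        define W where "W = ell (y2, y1) / \<alpha>"
        define la0 where "la0 = - Im W / Re dmu"
        define \<sigma>0 where "\<sigma>0 = Re W - la0 * Im dmu"
        have W: "complex_of_real \<sigma>0 - \<i> * complex_of_real la0 * dmu = W"
          using Rd by (simp add: complex_eq_iff \<sigma>0_def la0_def field_simps)
        define V where "V = (y2, y1) - \<sigma>0 *\<^sub>R embc emb \<psi>s + la0 *\<^sub>R cmult \<i> (opc f0 \<psi>s)"
        have "ell V = ell (y2, y1) - complex_of_real \<sigma>0 * \<alpha> + complex_of_real la0 * (\<i> * \<beta>)"
          by (simp add: V_def linear_add[OF ellL] linear_diff[OF ellL] linear_scale[OF ellL] ellcm
              scaleR_conv_of_real \<alpha>_def \<beta>_def)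
        also have "\<dots> = ell (y2, y1) - \<alpha> * (complex_of_real \<sigma>0 - \<i> * complex_of_real la0 * dmu)"
          by (simp add: dmb algebra_simps)
        also have "\<dots> = 0" unfolding W W_def using \<alpha>0 by simp
        finally have "V \<in> range (ikA A emb 1)" using ellR by blast
        then obtain p0 where p0: "V = ikA A emb 1 p0" by (rule rangeE)
        define z where "z = Complex (r2 - inner d (fst p0)) (r1 - inner d (snd p0))"
        define p where "p = p0 + cmult z \<psi>s"
        define c where "c = fst p"
        define b where "b = snd p"
        have "ikA A emb 1 (c, b) = ikA A emb 1 p" by (simp add: c_def b_def)
        also have "\<dots> = V" by (simp add: p_def p0 linear_add[OF lT] cT psi_ker)
        finally have "(Y2 la0 \<sigma>0 b c, Y1 la0 \<sigma>0 b c) - \<sigma>0 *\<^sub>R embc emb \<psi>s + la0 *\<^sub>R cmult \<i> (opc f0 \<psi>s) = V"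
          unfolding E[where la=la0 and \<sigma>=\<sigma>0 and b=b and c=c] .
        then have Yeq: "Y2 la0 \<sigma>0 b c = y2 \<and> Y1 la0 \<sigma>0 b c = y1" by (simp add: V_def)
        have ib: "inner d b = r1"
          by (simp add: b_def p_def ps cmult_pair inner_add_right d1 d2 z_def)
        have ic: "inner d c = r2"
          by (simp add: c_def p_def ps cmult_pair inner_add_right inner_diff_right d1 d2 z_def)
        have "S (la0, \<sigma>0, uf a b c) = y" unfolding Sform ye using ib ic Yeq Aa by simp
        moreover have "(la0, \<sigma>0, uf a b c) \<in> UNIV \<times> UNIV \<times> X01" unfolding X01_eq by blast
        ultimately show "y \<in> S ` (UNIV \<times> UNIV \<times> X01)" by (rule image_eqI[OF sym])
      qed
    qed
  qed
  show ?thesis unfolding Let_def using main unfolding S_def l1_def l2_def ustar_def f0_def X01_def Y01_def .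
qed

end
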